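(* Let $\sigma\in\operatorname{Aut}(\mathcal{H}_N')$. Then for every $\bm r\in\mathbb{Z}^N\setminus\{\bm0\}$ there exists $\bm s\in\mathbb{Z}^N\setminus\{\bm0\}$ such that $\sigma(\mathbb{K}h_{\bm r})=\mathbb{K}h_{\bm s}$ and $\sigma(\mathbb{K}h_{-\bm r})=\mathbb{K}h_{-\bm s}$.
   Context: $\mathbb{K}$ is an algebraically closed field of characteristic zero, $N=2m\ge2$ even, $(\cdot,\cdot)$ the bilinear form on $\mathbb{K}^N$ with $(e_i,e_j)=\delta_{ij}$. Let $A_N=\mathbb{K}[t_1^{\pm1},\dots,t_N^{\pm1}]$, $d_i=t_i\frac{\partial}{\partial t_i}$, $t^{\bm r}=t_1^{r_1}\cdots t_N^{r_N}$, $D(u,\bm r)=\sum_i u_it^{\bm r}d_i$. Let $\bm J=\begin{pmatrix} O_m & I_m\\ -I_m & O_m\end{pmatrix}$, $\overline{\bm r}=\bm J\bm r$, $h_{\bm r}=D(\overline{\bm r},\bm r)$ (so $h_{\bm0}=0$). $\mathcal{H}_N'=\operatorname{span}_{\mathbb{K}}\{h_{\bm r}:\bm r\in\mathbb{Z}^N\setminus\{\bm0\}\}$ is the Lie algebra with bracket $[h_{\bm r},h_{\bm s}]=(\overline{\bm r},\bm s)h_{\bm r+\bm s}$; it is $\mathbb{Z}^N$-graded with degree-$\bm r$ component $\mathbb{K}h_{\bm r}$ for $\bm r\neq\bm0$. *)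

theory Defs
  imports "HOL-Computational_Algebra.Polynomial" "HOL-Library.Function_Algebras"
begin

text \<open>Z^N with N = 2m is modelled as integer vectors nat => int supported in {0..<2m}.\<close>
definition lattice :: "nat \<Rightarrow> (nat \<Rightarrow> int) set" where
  "lattice m = {r. \<forall>i\<ge>2*m. r i = 0}"

text \<open>(J r, s) with J = [[0, I],[-I, 0]]: (J r)_i = r_(m+i), (J r)_(m+i) = - r_i for i < m.\<close>
definition Jvec :: "nat \<Rightarrow> (nat \<Rightarrow> int) \<Rightarrow> (nat \<Rightarrow> int)" where
  "Jvec m r = (\<lambda>i. if i < m then r (m + i) else if i < 2*m then - r (i - m) else 0)"

definition form :: "nat \<Rightarrow> (nat \<Rightarrow> int) \<Rightarrow> (nat \<Rightarrow> int) \<Rightarrow> int" where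
  "form m r s = (\<Sum>i<2*m. r i * s i)"

text \<open>Elements of H_N': finitely supported coefficient functions on Z^N \ {0};
  f corresponds to the sum over r of f r * h_r.\<close>
definition HN :: "nat \<Rightarrow> ((nat \<Rightarrow> int) \<Rightarrow> 'k::field) set" where
  "HN m = {f. finite {r. f r \<noteq> 0} \<and> {r. f r \<noteq> 0} \<subseteq> lattice m - {0}}"

text \<open>Bracket extended bilinearly from [h_r, h_s] = (J r, s) h_(r+s).\<close>
definition brk :: "nat \<Rightarrow> ((nat \<Rightarrow> int) \<Rightarrow> 'k::field) \<Rightarrow> ((nat \<Rightarrow> int) \<Rightarrow> 'k) \<Rightarrow> ((nat \<Rightarrow> int) \<Rightarrow> 'k)" where
  "brk m f g = (\<lambda>t. if t = 0 then 0 else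
      (\<Sum>r\<in>{r. f r \<noteq> 0}. of_int (form m (Jvec m r) (t - r)) * f r * g (t - r)))"

definition hvec :: "(nat \<Rightarrow> int) \<Rightarrow> ((nat \<Rightarrow> int) \<Rightarrow> 'k::field)" where
  "hvec r = (\<lambda>s. if s = r then 1 else 0)"

definition line :: "(nat \<Rightarrow> int) \<Rightarrow> ((nat \<Rightarrow> int) \<Rightarrow> 'k::field) set" where
  "line r = {(\<lambda>s. c * hvec r s) | c. True}"

definition is_aut :: "nat \<Rightarrow> (((nat \<Rightarrow> int) \<Rightarrow> 'k::field) \<Rightarrow> ((nat \<Rightarrow> int) \<Rightarrow> 'k)) \<Rightarrow> bool" where
  "is_aut m \<sigma> \<longleftrightarrow> bij_betw \<sigma> (HN m) (HN m)
     \<and> (\<forall>f\<in>HN m. \<forall>g\<in>HN m. \<sigma> (f + g) = \<sigma> f + \<sigma> g)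
     \<and> (\<forall>c. \<forall>f\<in>HN m. \<sigma> (\<lambda>s. c * f s) = (\<lambda>s. c * \<sigma> f s))
     \<and> (\<forall>f\<in>HN m. \<forall>g\<in>HN m. \<sigma> (brk m f g) = brk m (\<sigma> f) (\<sigma> g))"

end

theory Submission imports Defs begin

definition om :: "nat \<Rightarrow> (nat\<Rightarrow>int) \<Rightarrow> (nat\<Rightarrow>int) \<Rightarrow> int" where
  "om m a b = form m (Jvec m a) b"

lemma sum_2m: "(\<Sum>i<2*(m::nat). f i) = (\<Sum>i<m. f i) + (\<Sum>i<m. f (m+i)::'a::comm_monoid_add)"
proof -
  have "{..<2*m} = {..<m} \<union> {m..<2*m}" by auto
  hence "(\<Sum>i<2*m. f i) = (\<Sum>i<m. f i) + (\<Sum>i\<in>{m..<2*m}. f i)"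
    by (metis sum.union_disjoint finite_lessThan finite_atLeastLessThan ivl_disj_int(2) lessThan_atLeast0)
  moreover have "(\<Sum>i\<in>{m..<2*m}. f i) = (\<Sum>i<m. f (m+i))"
  proof -
    have "{m..<2*m} = (\<lambda>i. m+i) ` {..<m}" 
      apply (auto simp: image_iff)
      subgoal for x by (rule bexI[where x="x-m"]) auto
      done
    thus ?thesis by (simp add: sum.reindex)
  qed
  ultimately show ?thesis by simp
qed

lemma om_formula: "om m a b = (\<Sum>i<m. a (m+i) * b i) - (\<Sum>i<m. a i * b (m+i))"
  unfolding om_def form_def sum_2m Jvec_def by (simp add: sum_negf)

lemma om_add2: "om m a (b + c) = om m a b + om m a c"
  by (simp add: om_formula sum.distrib algebra_simps)
lemma om_diff2: "om m a (b - c) = om m a b - om m a c"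
  by (simp add: om_formula sum_subtractf algebra_simps)
lemma om_add1: "om m (a + b) c = om m a c + om m b c"
  by (simp add: om_formula sum.distrib algebra_simps)
lemma om_neg1: "om m (- a) c = - om m a c"
  by (simp add: om_formula sum_negf algebra_simps)
lemma om_neg2: "om m a (- c) = - om m a c"
  by (simp add: om_formula sum_negf algebra_simps)
lemma om_anti: "om m a b = - om m b a"
  by (simp add: om_formula algebra_simps mult.commute)
lemma om_self: "om m a a = 0"
  using om_anti[of m a a] by simp
lemma om_zero2: "om m a 0 = 0"
  by (simp add: om_formula)


definition spt :: "('a \<Rightarrow> 'b::zero) \<Rightarrow> 'a set" where "spt f = {x. f x \<noteq> 0}"

lemma brk_eq: "brk m f g t = (if t = 0 then 0 else
   (\<Sum>r\<in>spt f. of_int (om m r (t - r)) * f r * g (t - r)))"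
  by (simp add: brk_def om_def spt_def)

lemma brk_nz: assumes "brk m f g t \<noteq> 0"
  shows "t \<noteq> 0 \<and> (\<exists>r. f r \<noteq> 0 \<and> g (t - r) \<noteq> 0)"
proof -
  have t: "t \<noteq> 0" using assms by (auto simp: brk_eq)
  have "(\<Sum>r\<in>spt f. of_int (om m r (t - r)) * f r * g (t - r)) \<noteq> 0"
    using assms t by (simp add: brk_eq)
  then obtain r where "r \<in> spt f" "of_int (om m r (t - r)) * f r * g (t - r) \<noteq> 0"
    by (meson sum.neutral)
  thus ?thesis using t by (auto simp: spt_def)
qed

lemma brk_spt: "spt (brk m f g) \<subseteq> (\<lambda>(a,b). a + b) ` (spt f \<times> spt g)"
proof
  fix t assume "t \<in> spt (brk m f g)"
  then obtain r where "f r \<noteq> 0" "g (t - r) \<noteq> 0" using brk_nz[of m f g t] by (auto simp: spt_def)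
  hence "(r, t - r) \<in> spt f \<times> spt g" by (simp add: spt_def)
  moreover have "t = (\<lambda>(a,b). a + b) (r, t - r)" by simp
  ultimately show "t \<in> (\<lambda>(a,b). a + b) ` (spt f \<times> spt g)" by blast
qed

lemma brk_fin: "finite (spt f) \<Longrightarrow> finite (spt g) \<Longrightarrow> finite (spt (brk m f g))"
  by (rule finite_subset[OF brk_spt]) auto

lemma brk_zero: "brk m f g 0 = 0" by (simp add: brk_eq)

lemma lattice_add: "a \<in> lattice m \<Longrightarrow> b \<in> lattice m \<Longrightarrow> a + b \<in> lattice m"
  by (simp add: lattice_def)
lemma lattice_neg: "a \<in> lattice m \<Longrightarrow> - a \<in> lattice m"
  by (simp add: lattice_def)

lemma HN_iff: "f \<in> HN m \<longleftrightarrow> finite (spt f) \<and> spt f \<subseteq> lattice m - {0}"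
  by (simp add: HN_def spt_def)

lemma brk_HN: assumes "f \<in> HN m" "g \<in> HN m" shows "brk m f g \<in> HN m"
proof -
  have "finite (spt (brk m f g))" using assms brk_fin HN_iff by blast
  moreover have "spt (brk m f g) \<subseteq> lattice m - {0}"
  proof
    fix t assume t: "t \<in> spt (brk m f g)"
    have "t \<in> (\<lambda>(a,b). a + b) ` (spt f \<times> spt g)" using t brk_spt by blast
    then obtain a b where "a \<in> spt f" "b \<in> spt g" "t = a + b" by auto
    hence "t \<in> lattice m" using assms lattice_add[of a m b] by (auto simp: HN_iff)
    moreover have "t \<noteq> 0" using t brk_zero by (auto simp: spt_def)
    ultimately show "t \<in> lattice m - {0}" by simp
  qed
  ultimately show ?thesis by (simp add: HN_iff)
qed

lemma HN_add: "f \<in> HN m \<Longrightarrow> g \<in> HN m \<Longrightarrow> f + g \<in> HN m"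
proof -
  assume a: "f \<in> HN m" "g \<in> HN m"
  have "spt (f + g) \<subseteq> spt f \<union> spt g" by (auto simp: spt_def)
  thus ?thesis using a unfolding HN_iff by (meson finite_Un finite_subset le_sup_iff subset_trans)
qed

lemma HN_smul: "f \<in> HN m \<Longrightarrow> (\<lambda>s. c * f s) \<in> HN m"
proof -
  assume a: "f \<in> HN m"
  have "spt (\<lambda>s. c * f s) \<subseteq> spt f" by (auto simp: spt_def)
  thus ?thesis using a unfolding HN_iff by (meson finite_subset subset_trans)
qed

lemma HN_zero: "0 \<in> HN m" by (simp add: HN_iff spt_def)

lemma spt_hvec: "spt (hvec r :: _ \<Rightarrow> 'k::field) = {r}" by (auto simp: spt_def hvec_def)

lemma hvec_HN: "r \<in> lattice m - {0} \<Longrightarrow> (hvec r :: _ \<Rightarrow> 'k::field) \<in> HN m"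
  by (simp add: HN_iff spt_hvec)

lemma brk_hvec: "brk m (hvec a :: _ \<Rightarrow> 'k::field) w t = (if t = 0 then 0 else of_int (om m a (t - a)) * w (t - a))"
  by (simp add: brk_eq spt_hvec) (simp add: hvec_def)

inductive kill :: "(((nat\<Rightarrow>int) \<Rightarrow> 'k) \<Rightarrow> ((nat\<Rightarrow>int) \<Rightarrow> 'k)) \<Rightarrow> ((nat\<Rightarrow>int) \<Rightarrow> 'k::field) \<Rightarrow> bool"
  for T where
  k0: "kill T 0"
| ks: "kill T (\<lambda>s. T y s - c * y s) \<Longrightarrow> kill T y"

lemma kill_diag:
  assumes T: "\<And>w. T w = (\<lambda>t. \<mu> t * w t)" and fin: "finite S"
  shows "spt w \<subseteq> S \<Longrightarrow> kill T w"
  using fin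
proof (induction S arbitrary: w rule: finite_induct)
  case empty
  hence "w = 0" by (auto simp: spt_def fun_eq_iff)
  then show ?case by (metis k0)
next
  case (insert a S)
  let ?w = "\<lambda>s. T w s - \<mu> a * w s"
  have "spt ?w \<subseteq> S" using insert.prems by (auto simp: spt_def T algebra_simps)
  hence "kill T ?w" using insert.IH by blast
  thus ?case by (rule ks)
qed


lemma arith_step1: "(a::int) \<noteq> 0 \<Longrightarrow> a*g \<ge> 0 \<Longrightarrow> a + g \<noteq> 0 \<and> (a+g)*g \<ge> 0"
proof -
  assume a: "a \<noteq> 0" "a*g \<ge> 0"
  have "(a+g)*g = a*g + g*g" by (simp add: algebra_simps)
  moreover have "g*g \<ge> 0" by simp
  ultimately have 1: "(a+g)*g \<ge> 0" using a by linarith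
  have "a + g \<noteq> 0"
  proof
    assume "a + g = 0" hence "g = -a" by simp
    hence "a*g = -(a*a)" by simp
    moreover have "a*a > 0" using a(1) by (auto simp: zero_less_mult_iff linorder_neq_iff)
    ultimately show False using a by linarith
  qed
  thus ?thesis using 1 by simp
qed

lemma arith_step2: "(b::int) \<noteq> 0 \<Longrightarrow> b*g \<le> 0 \<Longrightarrow> b - g \<noteq> 0 \<and> (b-g)*g \<le> 0"
  using arith_step1[of "-b" g] by (simp add: algebra_simps)

locale aord =
  fixes lt :: "(nat\<Rightarrow>int) \<Rightarrow> (nat\<Rightarrow>int) \<Rightarrow> bool"
  assumes irr: "\<not> lt a a"
    and trn: "lt a b \<Longrightarrow> lt b c \<Longrightarrow> lt a c"
    and tot: "a \<noteq> b \<Longrightarrow> lt a b \<or> lt b a"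
    and tra: "lt a b \<Longrightarrow> lt (a + c) (b + c)"
begin

definition ismax where "ismax S v \<longleftrightarrow> v \<in> S \<and> (\<forall>w\<in>S. w \<noteq> v \<longrightarrow> lt w v)"

definition le where "le a b \<longleftrightarrow> a = b \<or> lt a b"

lemma ismax_ex: "finite S \<Longrightarrow> S \<noteq> {} \<Longrightarrow> \<exists>v. ismax S v"
proof (induction S rule: finite_ne_induct)
  case (singleton x)
  then show ?case by (auto simp: ismax_def)
next
  case (insert x F)
  then obtain v where v: "ismax F v" by blast
  show ?case
  proof (cases "lt v x")
    case True
    have "ismax (insert x F) x" unfolding ismax_def
    proof (intro conjI ballI impI)
      fix w assume "w \<in> insert x F" "w \<noteq> x"
      hence "w \<in> F" by simp
      thus "lt w x" using v True trn[of w v x] unfolding ismax_def by metis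
    qed simp
    then show ?thesis by blast
  next
    case False
    hence "x = v \<or> lt x v" using tot by blast
    hence "ismax (insert x F) v" using v unfolding ismax_def by auto
    then show ?thesis by blast
  qed
qed

lemma ismax_uniq: "ismax S v \<Longrightarrow> ismax S w \<Longrightarrow> v = w"
proof (rule ccontr)
  assume a: "ismax S v" "ismax S w" "v \<noteq> w"
  hence "lt w v" "lt v w" unfolding ismax_def by auto
  hence "lt v v" by (rule trn[rotated])
  thus False using irr by blast
qed

definition lead :: "((nat\<Rightarrow>int) \<Rightarrow> 'k::zero) \<Rightarrow> (nat\<Rightarrow>int)" where
  "lead f = (SOME v. ismax (spt f) v)"

lemma lead: "finite (spt f) \<Longrightarrow> f \<noteq> 0 \<Longrightarrow> ismax (spt f) (lead f)"
proof -
  assume "finite (spt f)" "f \<noteq> 0"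
  moreover have "spt f \<noteq> {}" using \<open>f \<noteq> 0\<close> by (auto simp: spt_def fun_eq_iff)
  ultimately obtain v where "ismax (spt f) v" using ismax_ex by blast
  thus ?thesis unfolding lead_def by (rule someI[of "ismax (spt f)" v])
qed

lemma lead_eq: "ismax (spt f) v \<Longrightarrow> lead f = v"
  unfolding lead_def using someI[of "ismax (spt f)" v] ismax_uniq by blast

lemma le_lt_trans: "le a b \<Longrightarrow> lt b c \<Longrightarrow> lt a c"
proof -
  assume 1: "le a b" and 2: "lt b c"
  show "lt a c"
  proof (cases "a = b")
    case True thus ?thesis using 2 by simp
  next
    case False hence "lt a b" using 1 le_def by simp
    thus ?thesis using 2 by (rule trn)
  qed
qed

lemma le_trans: "le a b \<Longrightarrow> le b c \<Longrightarrow> le a c"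
proof -
  assume 1: "le a b" and 2: "le b c"
  show "le a c" using 2 unfolding le_def
  proof
    assume "lt b c" thus "a = c \<or> lt a c" using le_lt_trans[OF 1] by blast
  next
    assume "b = c" thus "a = c \<or> lt a c" using 1 le_def by simp
  qed
qed

lemma le_add: "le a b \<Longrightarrow> le c e \<Longrightarrow> le (a + c) (b + e)"
proof -
  assume 1: "le a b" and 2: "le c e"
  have "le (a + c) (b + c)" using 1 tra[of a b c] unfolding le_def by blast
  moreover have "le (c + b) (e + b)" using 2 tra[of c e b] unfolding le_def by blast
  hence "le (b + c) (b + e)" by (simp only: add.commute)
  ultimately show ?thesis by (rule le_trans)
qed

lemma ismax_le: "ismax S v \<Longrightarrow> w \<in> S \<Longrightarrow> le w v"
  unfolding ismax_def le_def by blast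

lemma not_in_above: "ismax S v \<Longrightarrow> lt v w \<Longrightarrow> w \<notin> S"
proof
  assume "ismax S v" "lt v w" "w \<in> S"
  hence "lt w v" using irr unfolding ismax_def by auto
  hence "lt v v" using \<open>lt v w\<close> trn by blast
  thus False using irr by blast
qed

lemma brk_lead:
  fixes x y :: "(nat\<Rightarrow>int) \<Rightarrow> 'k::field"
  assumes fx: "finite (spt x)" and fy: "finite (spt y)" and nx: "x \<noteq> 0" and ny: "y \<noteq> 0"
  shows "brk m x y (lead x + lead y) = of_int (om m (lead x) (lead y)) * x (lead x) * y (lead y)"
    and "brk m x y t \<noteq> 0 \<Longrightarrow> le t (lead x + lead y)"
proof -
  let ?A = "lead x" and ?v = "lead y"
  have mx: "ismax (spt x) ?A" using lead fx nx by blast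
  have my: "ismax (spt y) ?v" using lead fy ny by blast
  show "brk m x y (?A + ?v) = of_int (om m ?A ?v) * x ?A * y ?v"
  proof (cases "?A + ?v = 0")
    case True
    hence "?v = - ?A" by (simp add: add_eq_0_iff)
    hence "om m ?A ?v = 0" by (simp add: om_neg2 om_self)
    then show ?thesis using True by (simp add: brk_eq)
  next
    case False
    have A: "?A \<in> spt x" using mx ismax_def by blast
    have z: "of_int (om m r (?A + ?v - r)) * x r * y (?A + ?v - r) = 0"
      if "r \<in> spt x - {?A}" for r
    proof -
      have "lt r ?A" using that mx ismax_def by blast
      hence "lt (r + (?v - r)) (?A + (?v - r))" by (rule tra)
      hence "lt ?v (?A + ?v - r)" by (simp add: algebra_simps)
      hence "?A + ?v - r \<notin> spt y" using not_in_above my by blast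
      thus ?thesis by (simp add: spt_def)
    qed
    have "brk m x y (?A + ?v) = (\<Sum>r\<in>spt x. of_int (om m r (?A + ?v - r)) * x r * y (?A + ?v - r))"
      using False by (simp add: brk_eq)
    also have "\<dots> = of_int (om m ?A (?A + ?v - ?A)) * x ?A * y (?A + ?v - ?A)
        + (\<Sum>r\<in>spt x - {?A}. of_int (om m r (?A + ?v - r)) * x r * y (?A + ?v - r))"
      using A fx by (simp add: sum.remove)
    also have "\<dots> = of_int (om m ?A ?v) * x ?A * y ?v"
    proof -
      have "(\<Sum>r\<in>spt x - {?A}. of_int (om m r (?A + ?v - r)) * x r * y (?A + ?v - r)) = 0"
        by (rule sum.neutral) (use z in blast)
      thus ?thesis by simp
    qed
    finally show ?thesis .
  qed
  assume "brk m x y t \<noteq> 0"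
  then obtain r where r: "x r \<noteq> 0" "y (t - r) \<noteq> 0" using brk_nz by blast
  hence "le r ?A" "le (t - r) ?v" using mx my ismax_le by (auto simp: spt_def)
  hence "le (r + (t - r)) (?A + ?v)" by (rule le_add)
  thus "le t (?A + ?v)" by simp
qed

end


context aord begin

lemma no_pos:
  fixes z z' :: "(nat\<Rightarrow>int) \<Rightarrow> 'k::field_char_0"
  assumes fz: "finite (spt z)" and fz': "finite (spt z')" and nz: "z \<noteq> 0" and nz': "z' \<noteq> 0"
   and kv: "kill (\<lambda>y. brk m z (brk m z' y)) (hvec v)"
   and S1: "om m (lead z') v \<noteq> 0" "om m (lead z') v * om m (lead z') (lead z) \<ge> 0"
   and S2: "om m (lead z) v - om m (lead z') (lead z) \<noteq> 0"
      "(om m (lead z) v - om m (lead z') (lead z)) * om m (lead z') (lead z) \<le> 0"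
  shows "\<not> lt 0 (lead z + lead z')"
proof
  assume pos: "lt 0 (lead z + lead z')"
  define A where "A = lead z"
  define B where "B = lead z'"
  define \<gamma> where "\<gamma> = om m B A"
  define T where "T = (\<lambda>y. brk m z (brk m z' y))"
  define inS where "inS w \<longleftrightarrow> om m B w \<noteq> 0 \<and> om m B w * \<gamma> \<ge> 0 \<and> om m A w - \<gamma> \<noteq> 0
      \<and> (om m A w - \<gamma>) * \<gamma> \<le> 0" for w
  have omAB: "om m A B = - \<gamma>" using om_anti[of m A B] \<gamma>_def by simp
  have step_in: "inS (A + (B + w))" if "inS w" for w
  proof -
    have e1: "om m B (A + (B + w)) = om m B w + \<gamma>"
      by (simp add: om_add2 om_self \<gamma>_def)
    have e2: "om m A (A + (B + w)) - \<gamma> = (om m A w - \<gamma>) - \<gamma>"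
      by (simp add: om_add2 om_self omAB)
    show ?thesis unfolding inS_def e1 e2
      using arith_step1[of "om m B w" \<gamma>] arith_step2[of "om m A w - \<gamma>" \<gamma>] that
      unfolding inS_def by simp
  qed
  have mz: "ismax (spt z) A" using lead fz nz A_def by blast
  have mz': "ismax (spt z') B" using lead fz' nz' B_def by blast
  have zA: "z A \<noteq> 0" using mz by (simp add: ismax_def spt_def)
  have zB: "z' B \<noteq> 0" using mz' by (simp add: ismax_def spt_def)
  have main: "kill T y \<Longrightarrow> finite (spt y) \<Longrightarrow> y \<noteq> 0 \<Longrightarrow> inS (lead y) \<Longrightarrow> False" for y
  proof (induction rule: kill.induct)
    case k0 thus ?case by simp
  next
    case (ks y c)
    let ?v = "lead y"
    have my: "ismax (spt y) ?v" using lead ks.prems by blast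
    have yv: "y ?v \<noteq> 0" using my by (simp add: ismax_def spt_def)
    define g where "g = brk m z' y"
    have fg: "finite (spt g)" using brk_fin fz' ks.prems(1) g_def by blast
    have gval: "g (B + ?v) = of_int (om m B ?v) * z' B * y ?v"
      using brk_lead(1)[OF fz' ks.prems(1) nz' ks.prems(2)] by (simp add: g_def B_def)
    have gnz: "g (B + ?v) \<noteq> 0" using gval ks.prems(3) zB yv by (simp add: inS_def)
    have gle: "le t (B + ?v)" if "g t \<noteq> 0" for t
      using brk_lead(2)[OF fz' ks.prems(1) nz' ks.prems(2)] that by (simp add: g_def B_def)
    have mg: "ismax (spt g) (B + ?v)" unfolding ismax_def using gnz gle
      by (auto simp: spt_def le_def)
    hence lg: "lead g = B + ?v" by (rule lead_eq)
    have g0: "g \<noteq> 0" using gnz by auto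
    define Ty where "Ty = brk m z g"
    have Tyval: "Ty (A + (B + ?v)) = of_int (om m A (B + ?v)) * z A * g (B + ?v)"
      using brk_lead(1)[OF fz fg nz g0] lg by (simp add: Ty_def A_def)
    have "om m A (B + ?v) = om m A ?v - \<gamma>" by (simp add: om_add2 omAB)
    hence Tynz: "Ty (A + (B + ?v)) \<noteq> 0" using Tyval ks.prems(3) zA gnz by (simp add: inS_def)
    have Tyle: "le t (A + (B + ?v))" if "Ty t \<noteq> 0" for t
      using brk_lead(2)[OF fz fg nz g0] that lg by (simp add: Ty_def A_def)
    define w where "w = A + (B + ?v)"
    have "lt (0 + ?v) (A + B + ?v)" using tra[OF pos] unfolding A_def B_def by simp
    hence ltw: "lt ?v w" by (simp add: w_def add.assoc)
    have yw: "y w = 0" using not_in_above[OF my ltw] by (simp add: spt_def)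
    define y' where "y' = (\<lambda>s. T y s - c * y s)"
    have Ty: "T y = Ty" by (simp add: T_def Ty_def g_def)
    have y'w: "y' w \<noteq> 0" using Tynz yw by (simp add: y'_def Ty w_def)
    have y'le: "le t w" if "y' t \<noteq> 0" for t
    proof (cases "Ty t = 0")
      case True
      hence "y t \<noteq> 0" using that by (simp add: y'_def Ty)
      hence "le t ?v" using my ismax_le by (simp add: spt_def)
      hence "lt t w" using ltw le_lt_trans by blast
      thus ?thesis by (simp add: le_def)
    next
      case False thus ?thesis using Tyle w_def by simp
    qed
    have my': "ismax (spt y') w" unfolding ismax_def using y'w y'le
      by (auto simp: spt_def le_def)
    have "spt y' \<subseteq> spt Ty \<union> spt y" by (auto simp: spt_def y'_def Ty)
    moreover have "finite (spt Ty)" using brk_fin fz fg Ty_def by blast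
    ultimately have fy': "finite (spt y')" using ks.prems(1) by (meson finite_Un finite_subset)
    have "lead y' = w" using my' by (rule lead_eq)
    moreover have "y' \<noteq> 0" using y'w by auto
    moreover have "inS w" using step_in ks.prems(3) w_def by simp
    ultimately show False using ks.IH[folded y'_def] fy' by blast
  qed
  have "ismax (spt (hvec v :: _ \<Rightarrow> 'k)) v" by (simp add: spt_hvec ismax_def)
  hence lv: "lead (hvec v :: _ \<Rightarrow> 'k) = v" by (rule lead_eq)
  have "(hvec v :: _ \<Rightarrow> 'k) \<noteq> 0" by (auto simp: hvec_def fun_eq_iff)
  moreover have "inS v" using S1 S2 by (simp add: inS_def A_def B_def \<gamma>_def)
  ultimately show False using main[of "hvec v"] kv lv by (simp add: T_def spt_hvec)
qed

end


lemma e_lattice: "i < 2*m \<Longrightarrow> (\<lambda>j. if j = i then 1 else 0) \<in> lattice m"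
  by (simp add: lattice_def)

lemma om_e: "i < 2*m \<Longrightarrow> om m a (\<lambda>j. if j = i then 1 else 0) = Jvec m a i"
proof -
  assume i: "i < 2*m"
  have "(\<Sum>j<2*m. Jvec m a j * (if j = i then 1 else 0)) = (\<Sum>j<2*m. if j = i then Jvec m a j else 0)"
    by (rule sum.cong) auto
  thus ?thesis using i by (simp add: om_def form_def)
qed

lemma Jvec_nz: assumes "a \<in> lattice m - {0}" shows "\<exists>i<2*m. Jvec m a i \<noteq> 0"
proof -
  obtain k where k: "a k \<noteq> 0" using assms by (auto simp: fun_eq_iff)
  have k2: "k < 2*m" using k assms by (auto simp: lattice_def not_less[symmetric])
  show ?thesis
  proof (cases "k < m")
    case True
    hence "Jvec m a (k + m) = - a k" by (simp add: Jvec_def)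
    thus ?thesis using True k by (intro exI[of _ "k+m"]) auto
  next
    case False
    have "k - m < m" using k2 False by simp
    hence "Jvec m a (k - m) = a k" using False by (simp add: Jvec_def)
    thus ?thesis using False k k2 by (intro exI[of _ "k-m"]) auto
  qed
qed

lemma exist_v:
  assumes a: "a \<in> lattice m - {0}" and b: "b \<in> lattice m - {0}"
  shows "\<exists>v\<in>lattice m - {0}. om m a v \<noteq> 0 \<and> om m b v \<noteq> 0"
proof -
  define e where "e i = (\<lambda>j::nat. if j = i then 1 else (0::int))" for i :: nat
  have eL: "i < 2*m \<Longrightarrow> e i \<in> lattice m" for i using e_lattice e_def by simp
  have oe: "i < 2*m \<Longrightarrow> om m c (e i) = Jvec m c i" for i c using om_e e_def by simp
  have nz: "om m a v \<noteq> 0 \<Longrightarrow> v \<noteq> 0" for v using om_zero2 by auto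
  show ?thesis
  proof (cases "\<exists>i<2*m. Jvec m a i \<noteq> 0 \<and> Jvec m b i \<noteq> 0")
    case True
    then obtain i where i: "i < 2*m" "Jvec m a i \<noteq> 0" "Jvec m b i \<noteq> 0" by blast
    thus ?thesis using eL oe nz by (intro bexI[of _ "e i"]) auto
  next
    case False
    obtain i where i: "i < 2*m" "Jvec m a i \<noteq> 0" using Jvec_nz a by blast
    obtain j where j: "j < 2*m" "Jvec m b j \<noteq> 0" using Jvec_nz b by blast
    have bi: "Jvec m b i = 0" using False i by blast
    have aj: "Jvec m a j = 0" using False j by blast
    have 1: "om m a (e i + e j) = Jvec m a i" using oe i j aj by (simp add: om_add2)
    have 2: "om m b (e i + e j) = Jvec m b j" using oe i j bi by (simp add: om_add2)
    have "e i + e j \<in> lattice m" using eL i j lattice_add by blast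
    thus ?thesis using 1 2 i j nz by (intro bexI[of _ "e i + e j"]) auto
  qed
qed

context aord begin

lemma no_pos2:
  fixes z z' :: "(nat\<Rightarrow>int) \<Rightarrow> 'k::field_char_0"
  assumes fz: "finite (spt z)" and fz': "finite (spt z')" and nz: "z \<noteq> 0" and nz': "z' \<noteq> 0"
   and Lz: "lead z \<in> lattice m - {0}" and Lz': "lead z' \<in> lattice m - {0}"
   and kv: "\<forall>v\<in>lattice m - {0}. kill (\<lambda>y. brk m z (brk m z' y)) (hvec v)"
  shows "\<not> lt 0 (lead z + lead z')"
proof (cases "om m (lead z') (lead z) = 0")
  case True
  then obtain v where v: "v \<in> lattice m - {0}" "om m (lead z') v \<noteq> 0" "om m (lead z) v \<noteq> 0"
    using exist_v[OF Lz' Lz] by blast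
  show ?thesis by (rule no_pos[OF fz fz' nz nz', of m v]) (use v kv True in auto)
next
  case False
  have s: "om m (lead z) (lead z) = 0" by (rule om_self)
  show ?thesis by (rule no_pos[OF fz fz' nz nz', of m "lead z"]) (use kv Lz False s in auto)
qed

end

definition lexlt :: "(nat\<Rightarrow>int) \<Rightarrow> (nat\<Rightarrow>int) \<Rightarrow> bool" where
  "lexlt a b \<longleftrightarrow> (\<exists>i. a i < b i \<and> (\<forall>j<i. a j = b j))"

lemma lex_irr: "\<not> lexlt a a" by (simp add: lexlt_def)

lemma lex_trn: assumes "lexlt a b" "lexlt b c" shows "lexlt a c"
proof -
  obtain i1 where 1: "a i1 < b i1" "\<forall>j<i1. a j = b j" using assms(1) lexlt_def by blast
  obtain i2 where 2: "b i2 < c i2" "\<forall>j<i2. b j = c j" using assms(2) lexlt_def by blast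
  show ?thesis
  proof (cases i1 i2 rule: linorder_cases)
    case less thus ?thesis using 1 2 unfolding lexlt_def by (intro exI[of _ i1]) auto
  next
    case equal thus ?thesis using 1 2 unfolding lexlt_def by (intro exI[of _ i1]) auto
  next
    case greater thus ?thesis using 1 2 unfolding lexlt_def by (intro exI[of _ i2]) auto
  qed
qed

lemma lex_tot: assumes "a \<noteq> b" shows "lexlt a b \<or> lexlt b a"
proof -
  obtain i where "a i \<noteq> b i" using assms by (auto simp: fun_eq_iff)
  define k where "k = (LEAST i. a i \<noteq> b i)"
  have k: "a k \<noteq> b k" unfolding k_def by (rule LeastI) fact
  have kk: "\<forall>j<k. a j = b j" unfolding k_def using not_less_Least by blast
  show ?thesis
  proof (cases "a k < b k")
    case True thus ?thesis using kk unfolding lexlt_def by blast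
  next
    case False hence "b k < a k" using k by simp
    thus ?thesis using kk unfolding lexlt_def by (metis)
  qed
qed

lemma lex_tra: "lexlt a b \<Longrightarrow> lexlt (a + c) (b + c)"
  by (simp add: lexlt_def)

interpretation L: aord lexlt
  by unfold_locales (auto intro: lex_trn lex_tra simp: lex_irr dest: lex_tot)

interpretation R: aord "\<lambda>a b. lexlt b a"
  by unfold_locales (auto intro: lex_trn lex_tra simp: lex_irr dest: lex_tot)


lemma line_img:
  fixes \<sigma> :: "((nat\<Rightarrow>int) \<Rightarrow> 'k::field) \<Rightarrow> ((nat\<Rightarrow>int) \<Rightarrow> 'k)"
  assumes smul: "\<forall>c. \<sigma> (\<lambda>s. c * f s) = (\<lambda>s. c * \<sigma> f s)"
    and sf: "\<sigma> f = (\<lambda>t. k * hvec s t)" and k: "k \<noteq> 0"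
  shows "\<sigma> ` {(\<lambda>t. c * f t) | c. True} = line s"
proof -
  have e: "\<sigma> (\<lambda>t. c * f t) = (\<lambda>t. (c * k) * hvec s t)" for c
    using smul sf by (simp add: mult.assoc)
  show ?thesis
  proof
    show "\<sigma> ` {(\<lambda>t. c * f t) | c. True} \<subseteq> line s"
      unfolding line_def using e by blast
  next
    show "line s \<subseteq> \<sigma> ` {(\<lambda>t. c * f t) | c. True}"
    proof
      fix x :: "(nat\<Rightarrow>int) \<Rightarrow> 'k" assume "x \<in> line s"
      then obtain c' where x: "x = (\<lambda>t. c' * hvec s t)" unfolding line_def by blast
      have "x = \<sigma> (\<lambda>t. (c' / k) * f t)" using e[of "c' / k"] k x by simp
      thus "x \<in> \<sigma> ` {(\<lambda>t. c * f t) | c. True}" by blast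
    qed
  qed
qed

theorem lemma3p2:
  fixes m :: nat and \<sigma> :: "((nat \<Rightarrow> int) \<Rightarrow> 'k::{alg_closed_field, field_char_0}) \<Rightarrow> ((nat \<Rightarrow> int) \<Rightarrow> 'k)"
  assumes "m \<ge> 1"
    and "is_aut m \<sigma>"
    and "r \<in> lattice m - {0}"
  shows "\<exists>s\<in>lattice m - {0}. \<sigma> ` line r = line s \<and> \<sigma> ` line (- r) = line (- s)"
proof -
  have bij: "bij_betw \<sigma> (HN m) (HN m)"
    and add: "\<forall>f\<in>HN m. \<forall>g\<in>HN m. \<sigma> (f + g) = \<sigma> f + \<sigma> g"
    and smul: "\<forall>c. \<forall>f\<in>HN m. \<sigma> (\<lambda>s. c * f s) = (\<lambda>s. c * \<sigma> f s)"
    and hom: "\<forall>f\<in>HN m. \<forall>g\<in>HN m. \<sigma> (brk m f g) = brk m (\<sigma> f) (\<sigma> g)"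
    using assms(2) unfolding is_aut_def by auto
  have inHN: "f \<in> HN m \<Longrightarrow> \<sigma> f \<in> HN m" for f by (rule bij_betw_apply[OF bij])
  have inj: "inj_on \<sigma> (HN m)" by (rule bij_betw_imp_inj_on[OF bij])
  have surj: "\<sigma> ` HN m = HN m" by (rule bij_betw_imp_surj_on[OF bij])
  have smul': "\<sigma> (\<lambda>s. c * f s) = (\<lambda>s. c * \<sigma> f s)" if "f \<in> HN m" for c f
    using smul that by blast
  have s00: "\<sigma> (\<lambda>s. 0 * (0::(nat\<Rightarrow>int)\<Rightarrow>'k) s) = (\<lambda>s. 0 * \<sigma> 0 s)" by (rule smul'[OF HN_zero])
  have z1: "(\<lambda>s. 0 * (0::(nat\<Rightarrow>int)\<Rightarrow>'k) s) = 0" by (simp add: fun_eq_iff)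
  have z2: "(\<lambda>s. 0 * \<sigma> 0 s) = 0" by (simp add: fun_eq_iff)
  have sig0: "\<sigma> 0 = 0" using s00 by (simp only: z1 z2)
  have rL: "r \<in> lattice m - {0}" "- r \<in> lattice m - {0}" using assms(3) lattice_neg by auto
  have hr: "(hvec r :: _ \<Rightarrow> 'k) \<in> HN m" and hmr: "(hvec (-r) :: _ \<Rightarrow> 'k) \<in> HN m"
    using hvec_HN rL by blast+
  define z where "z = \<sigma> (hvec r)"
  define z' where "z' = \<sigma> (hvec (-r))"
  have zH: "z \<in> HN m" "z' \<in> HN m" using inHN hr hmr z_def z'_def by auto
  have hnz: "(hvec a :: _ \<Rightarrow> 'k) \<noteq> 0" for a by (auto simp: hvec_def fun_eq_iff)
  have nz: "z \<noteq> 0" "z' \<noteq> 0"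
  proof -
    show "z \<noteq> 0"
    proof
      assume "z = 0" hence "\<sigma> (hvec r) = \<sigma> 0" using sig0 z_def by simp
      hence "hvec r = (0 :: _ \<Rightarrow> 'k)" using inj_onD[OF inj _ hr HN_zero] by blast
      thus False using hnz by blast
    qed
    show "z' \<noteq> 0"
    proof
      assume "z' = 0" hence "\<sigma> (hvec (-r)) = \<sigma> 0" using sig0 z'_def by simp
      hence "hvec (-r) = (0 :: _ \<Rightarrow> 'k)" using inj_onD[OF inj _ hmr HN_zero] by blast
      thus False using hnz by blast
    qed
  qed
  define T0 where "T0 = (\<lambda>w. brk m (hvec r) (brk m (hvec (-r)) w) :: (nat\<Rightarrow>int) \<Rightarrow> 'k)"
  have T0eq: "T0 w = (\<lambda>t. (- ((of_int (om m r t) :: 'k) ^ 2)) * w t)" for w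
  proof
    fix t
    show "T0 w t = (- ((of_int (om m r t) :: 'k) ^ 2)) * w t"
    proof (cases "t = 0 \<or> t = r")
      case True thus ?thesis by (auto simp: T0_def brk_hvec om_zero2 om_self)
    next
      case False
      hence "t - r \<noteq> 0" by simp
      thus ?thesis using False
        by (simp add: T0_def brk_hvec om_diff2 om_self om_neg1 power2_eq_square)
    qed
  qed
  have killT0: "finite (spt w) \<Longrightarrow> kill T0 w" for w
    using kill_diag[OF T0eq] by blast
  define T' where "T' = (\<lambda>y. brk m z (brk m z' y))"
  have T0HN: "w \<in> HN m \<Longrightarrow> T0 w \<in> HN m" for w
    unfolding T0_def using brk_HN hr hmr by blast
  have hom': "\<sigma> (brk m f g) = brk m (\<sigma> f) (\<sigma> g)" if "f \<in> HN m" "g \<in> HN m" for f g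
    using hom that by blast
  have comm: "\<sigma> (T0 w) = T' (\<sigma> w)" if w: "w \<in> HN m" for w
  proof -
    have 1: "brk m (hvec (-r)) w \<in> HN m" using brk_HN hmr w by blast
    have 2: "\<sigma> (brk m (hvec (-r)) w) = brk m z' (\<sigma> w)" using hom'[OF hmr w] z'_def by simp
    show ?thesis unfolding T0_def T'_def using hom'[OF hr 1] 2 z_def by simp
  qed
  have transport: "kill T0 w \<Longrightarrow> w \<in> HN m \<Longrightarrow> kill T' (\<sigma> w)" for w
  proof (induction rule: kill.induct)
    case k0 show ?case unfolding sig0 by (rule kill.k0)
  next
    case (ks w c)
    let ?w = "\<lambda>s. T0 w s - c * w s"
    have e1: "?w = T0 w + (\<lambda>s. (-c) * w s)" by (simp add: fun_eq_iff)
    have wH: "?w \<in> HN m" unfolding e1 using HN_add HN_smul T0HN ks.prems by blast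
    have "\<sigma> ?w = \<sigma> (T0 w) + \<sigma> (\<lambda>s. (-c) * w s)"
      unfolding e1 using add T0HN HN_smul ks.prems by blast
    also have "\<dots> = T' (\<sigma> w) + (\<lambda>s. (-c) * \<sigma> w s)"
      using comm[OF ks.prems] smul'[OF ks.prems, of "-c"] by simp
    also have "\<dots> = (\<lambda>s. T' (\<sigma> w) s - c * \<sigma> w s)" by (simp add: fun_eq_iff)
    finally have "\<sigma> ?w = (\<lambda>s. T' (\<sigma> w) s - c * \<sigma> w s)" .
    hence "kill T' (\<lambda>s. T' (\<sigma> w) s - c * \<sigma> w s)" using ks.IH wH by simp
    thus ?case by (rule kill.ks)
  qed
  have killall: "\<forall>v\<in>lattice m - {0}. kill T' (hvec v)"
  proof
    fix v assume v: "v \<in> lattice m - {0}"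
    hence "(hvec v :: _ \<Rightarrow> 'k) \<in> HN m" by (rule hvec_HN)
    hence "hvec v \<in> \<sigma> ` HN m" using surj by simp
    then obtain w where w: "w \<in> HN m" "hvec v = \<sigma> w" by (auto simp: image_iff)
    have "kill T0 w" using killT0 w by (simp add: HN_iff)
    thus "kill T' (hvec v)" using transport w by simp
  qed
  have fz: "finite (spt z)" "finite (spt z')" using zH by (auto simp: HN_iff)
  have sptL: "spt z \<subseteq> lattice m - {0}" "spt z' \<subseteq> lattice m - {0}" using zH by (auto simp: HN_iff)
  have mLz: "L.ismax (spt z) (L.lead z)" by (rule L.lead[OF fz(1) nz(1)])
  have mLz': "L.ismax (spt z') (L.lead z')" by (rule L.lead[OF fz(2) nz(2)])
  have mRz: "R.ismax (spt z) (R.lead z)" by (rule R.lead[OF fz(1) nz(1)])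
  have mRz': "R.ismax (spt z') (R.lead z')" by (rule R.lead[OF fz(2) nz(2)])
  have inL: "L.lead z \<in> lattice m - {0}" "L.lead z' \<in> lattice m - {0}"
    "R.lead z \<in> lattice m - {0}" "R.lead z' \<in> lattice m - {0}"
    using mLz mLz' mRz mRz' sptL unfolding L.ismax_def R.ismax_def by auto
  have LL: "\<not> lexlt 0 (L.lead z + L.lead z')"
    using L.no_pos2[OF fz nz inL(1,2) killall[unfolded T'_def]] .
  have RR: "\<not> lexlt (R.lead z + R.lead z') 0"
    using R.no_pos2[OF fz nz inL(3,4) killall[unfolded T'_def]] by simp
  define a where "a = L.lead z" define a' where "a' = L.lead z'"
  define b where "b = R.lead z" define b' where "b' = R.lead z'"
  have F1: "L.le (a + a') 0" using LL lex_tot[of "a+a'" 0] unfolding L.le_def a_def a'_def by auto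
  have F2: "L.le 0 (b + b')" using RR lex_tot[of 0 "b+b'"] unfolding L.le_def b_def b'_def by auto
  have "b \<in> spt z" using mRz unfolding R.ismax_def b_def by blast
  hence F3: "L.le b a" using mLz L.ismax_le unfolding a_def by blast
  have "b' \<in> spt z'" using mRz' unfolding R.ismax_def b'_def by blast
  hence F4: "L.le b' a'" using mLz' L.ismax_le unfolding a'_def by blast
  have F5: "L.le (b + b') (a + a')" by (rule L.le_add[OF F3 F4])
  have antisym: "x = y" if "L.le x y" "L.le y x" for x y
  proof (rule ccontr)
    assume "x \<noteq> y"
    with that have "lexlt x y" "lexlt y x" by (auto simp: L.le_def)
    hence "lexlt x x" by (rule lex_trn)
    thus False using lex_irr by blast
  qed
  have S0: "a + a' = 0" by (rule antisym[OF F1 L.le_trans[OF F2 F5]])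
  have S1: "b + b' = 0" by (rule antisym[OF L.le_trans[OF F5 F1] F2])
  have ab: "b = a"
  proof (rule ccontr)
    assume "b \<noteq> a"
    hence "lexlt b a" using F3 L.le_def by simp
    hence "lexlt (b + b') (a + b')" by (rule lex_tra)
    moreover have "L.le (b' + a) (a' + a)" using F4 lex_tra[of b' a' a] unfolding L.le_def by auto
    hence "L.le (a + b') (a + a')" by (simp add: add.commute)
    ultimately have "lexlt (b + b') (a + a')"
    proof (cases "a + b' = a + a'")
      case False
      hence "lexlt (a + b') (a + a')" using \<open>L.le (a + b') (a + a')\<close> L.le_def by simp
      thus ?thesis using \<open>lexlt (b + b') (a + b')\<close> lex_trn by blast
    qed simp
    thus False using S0 S1 lex_irr by simp
  qed
  have "a' = (a + a') - a" by simp
  hence ab': "a' = - a" using S0 by simp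
  have "b' = (b + b') - b" by simp
  hence "b' = - b" using S1 by simp
  hence bb': "b' = - a" using ab by simp
  have single: "spt f = {c}" if "L.ismax (spt f) c" "R.ismax (spt f) c" for f :: "(nat\<Rightarrow>int) \<Rightarrow> 'k" and c
  proof -
    have "w = c" if w: "w \<in> spt f" for w
    proof (rule ccontr)
      assume "w \<noteq> c"
      hence "lexlt w c" "lexlt c w" using w \<open>L.ismax (spt f) c\<close> \<open>R.ismax (spt f) c\<close>
        unfolding L.ismax_def R.ismax_def by auto
      hence "lexlt w w" by (rule lex_trn)
      thus False using lex_irr by blast
    qed
    moreover have "c \<in> spt f" using that unfolding L.ismax_def by blast
    ultimately show ?thesis by blast
  qed
  have sz: "spt z = {a}" using single[of z a] mLz mRz ab unfolding a_def b_def by simp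
  have sz': "spt z' = {- a}" using single[of z' "-a"] mLz' mRz' ab' bb' unfolding a'_def b'_def by simp
  have repr: "f = (\<lambda>t. f c * hvec c t)" if "spt f = {c}" for f :: "(nat\<Rightarrow>int) \<Rightarrow> 'k" and c
  proof
    fix t show "f t = f c * hvec c t" using that by (cases "t = c") (auto simp: hvec_def spt_def)
  qed
  have za: "z a \<noteq> 0" using sz by (auto simp: spt_def)
  have za': "z' (-a) \<noteq> 0" using sz' by (auto simp: spt_def)
  have aL: "a \<in> lattice m - {0}" using inL a_def by simp
  have zr: "\<sigma> (hvec r) = (\<lambda>t. z a * hvec a t)" using repr[OF sz] z_def by simp
  have zr': "\<sigma> (hvec (-r)) = (\<lambda>t. z' (-a) * hvec (-a) t)" using repr[OF sz'] z'_def by simp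
  have sm1: "\<forall>c. \<sigma> (\<lambda>s. c * hvec r s) = (\<lambda>s. c * \<sigma> (hvec r) s)" using smul'[OF hr] by blast
  have sm2: "\<forall>c. \<sigma> (\<lambda>s. c * hvec (-r) s) = (\<lambda>s. c * \<sigma> (hvec (-r)) s)" using smul'[OF hmr] by blast
  have "\<sigma> ` line r = line a"
    unfolding line_def[of r] by (rule line_img[OF sm1 zr za])
  moreover have "\<sigma> ` line (-r) = line (-a)"
    unfolding line_def[of "-r"] by (rule line_img[OF sm2 zr' za'])
  ultimately show ?thesis using aL by blast
qed

end
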